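(* Let $d\ge1$, $M=2^d$, $p\in(0,1]$, $r=1/p-1/2$, and consider estimating an unknown density $f\in\mathcal F^{+,1}_d(p)$ from $n$ i.i.d. samples $X_1,\dots,X_n$ drawn from $f$; the infimum below is over all estimators $\widehat f_n$ (functions of $X_1,\dots,X_n$ with values in real functions on $\{0,1\}^d$). (1) For every $\epsilon\in(0,1)$ there is a constant $C=C(p,\epsilon)>0$ such that whenever $\log M\le n\le M^{2(1-\epsilon)/p}$, $$\inf_{\widehat f_n}\sup_{f\in\mathcal F^{+,1}_d(p)}\mathbb E_f\|\widehat f_n-f\|^2_{L^2(\mu_d)}\ge\frac{C}{M}\left(\frac{\log M}{n}\right)^{2r/(2r+1)}.$$ (2) There is an absolute constant $C>0$ such that whenever $n\ge M^{2/p}$ and $M\ge4$, $$\inf_{\widehat f_n}\sup_{f\in\mathcal F^{+,1}_d(p)}\mathbb E_f\|\widehat f_n-f\|^2_{L^2(\mu_d)}\ge\frac{C}{n}.$$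
   Context: $\mu_d$ is counting measure on $\{0,1\}^d$, $\|g\|^2_{L^2(\mu_d)}=\sum_x g(x)^2$, $\log$ is the natural logarithm. Walsh functions: $\varphi_s(x)=2^{-d/2}(-1)^{\sum_j s^{(j)}x^{(j)}}$ for $s,x\in\{0,1\}^d$, and $\theta_s(g)=\sum_x g(x)\varphi_s(x)$. $\mathcal F_d(p)$ is the set of $g:\{0,1\}^d\to\mathbb R$ such that, with $|\theta_{(1)}|\ge\dots\ge|\theta_{(M)}|$ the coefficients of $g$ sorted by decreasing magnitude, $|\theta_{(m)}|\le M^{-1/2}m^{-1/p}$ for $1\le m\le M$; $\mathcal F^{+,1}_d(p)$ is the set of $g\in\mathcal F_d(p)$ with $g\ge0$ and $\sum_x g(x)=1$. *)

theory Defs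
  imports "HOL-Analysis.Analysis" "HOL-Library.Multiset"
begin

text \<open>The cube {0,1}^d is encoded as the subsets of {..<d}: a point x is the set of
coordinates equal to 1.  Then sum_j s_j x_j = card (s \<inter> x).\<close>

definition cube :: "nat \<Rightarrow> nat set set" where
  "cube d = Pow {..<d}"

definition walsh :: "nat \<Rightarrow> nat set \<Rightarrow> nat set \<Rightarrow> real" where
  "walsh d s x = 2 powr (- real d / 2) * (-1) ^ card (s \<inter> x)"

definition theta :: "nat \<Rightarrow> (nat set \<Rightarrow> real) \<Rightarrow> nat set \<Rightarrow> real" where
  "theta d g s = (\<Sum>x\<in>cube d. g x * walsh d s x)"

text \<open>Absolute values of the Walsh coefficients sorted in decreasing order
  (entry m-1 is |theta_(m)|).\<close>
definition sorted_coeffs :: "nat \<Rightarrow> (nat set \<Rightarrow> real) \<Rightarrow> real list" where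
  "sorted_coeffs d g = rev (sorted_list_of_multiset
      (image_mset (\<lambda>s. \<bar>theta d g s\<bar>) (mset_set (cube d))))"

definition Fd :: "nat \<Rightarrow> real \<Rightarrow> (nat set \<Rightarrow> real) set" where
  "Fd d p = {g. \<forall>m\<in>{1..2^d}.
      sorted_coeffs d g ! (m - 1) \<le> (2 ^ d) powr (-1/2) * (real m) powr (-1/p)}"

definition Fplus1 :: "nat \<Rightarrow> real \<Rightarrow> (nat set \<Rightarrow> real) set" where
  "Fplus1 d p = {g \<in> Fd d p. (\<forall>x\<in>cube d. g x \<ge> 0) \<and> (\<Sum>x\<in>cube d. g x) = 1}"

text \<open>Risk E_f || est(X_1..X_n) - f ||^2 for n i.i.d. samples with probability mass f.
  An estimator is any map from sample tuples (X_0,...,X_{n-1}) to real functions on the cube.\<close>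
definition risk :: "nat \<Rightarrow> nat \<Rightarrow> ((nat \<Rightarrow> nat set) \<Rightarrow> nat set \<Rightarrow> real)
      \<Rightarrow> (nat set \<Rightarrow> real) \<Rightarrow> real" where
  "risk d n est f = (\<Sum>X\<in>PiE {..<n} (\<lambda>_. cube d).
      (\<Prod>i<n. f (X i)) * (\<Sum>x\<in>cube d. (est X x - f x)\<^sup>2))"

definition minimax_risk :: "nat \<Rightarrow> real \<Rightarrow> nat \<Rightarrow> ereal" where
  "minimax_risk d p n = (INF est. SUP f\<in>Fplus1 d p. ereal (risk d n est f))"

end

theory Submission
  imports Defs
begin


lemma char_sum:
  assumes "finite D"
  shows "(\<Sum>x\<in>Pow D. (-1::real) ^ card (u \<inter> x)) = (if u \<inter> D = {} then 2 ^ card D else 0)"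
  using assms
proof (induction D arbitrary: u rule: finite_induct)
  case empty
  then show ?case by simp
next
  case (insert a D)
  have inj: "inj_on (insert a) (Pow D)" using insert(2)
    unfolding inj_on_def by (metis PowD insert_ident subsetD)
  have disj: "Pow D \<inter> insert a ` Pow D = {}" using insert(2) by auto
  have "(\<Sum>x\<in>Pow (insert a D). (-1::real) ^ card (u \<inter> x))
     = (\<Sum>x\<in>Pow D. (-1::real) ^ card (u \<inter> x)) + (\<Sum>x\<in>Pow D. (-1::real) ^ card (u \<inter> insert a x))"
    unfolding Pow_insert using insert(1) disj inj
    by (simp add: sum.union_disjoint sum.reindex)
  also have "\<dots> = (\<Sum>x\<in>Pow D. (-1::real) ^ card (u \<inter> x) + (-1::real) ^ card (u \<inter> insert a x))"
    by (simp add: sum.distrib)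
  finally have eq: "(\<Sum>x\<in>Pow (insert a D). (-1::real) ^ card (u \<inter> x)) =
     (\<Sum>x\<in>Pow D. (-1::real) ^ card (u \<inter> x) + (-1::real) ^ card (u \<inter> insert a x))" .
  show ?case
  proof (cases "a \<in> u")
    case True
    have "\<And>x. x \<in> Pow D \<Longrightarrow> (-1::real) ^ card (u \<inter> x) + (-1::real) ^ card (u \<inter> insert a x) = 0"
    proof -
      fix x assume x: "x \<in> Pow D"
      have fx: "finite (u \<inter> x)" using x insert(1) finite_subset by blast
      have "u \<inter> insert a x = insert a (u \<inter> x)" using True by auto
      moreover have "a \<notin> u \<inter> x" using x insert(2) by auto
      ultimately have "card (u \<inter> insert a x) = Suc (card (u \<inter> x))" using fx by simp
      then show "(-1::real) ^ card (u \<inter> x) + (-1::real) ^ card (u \<inter> insert a x) = 0" by simp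
    qed
    then show ?thesis using eq True by simp
  next
    case False
    have "\<And>x. u \<inter> insert a x = u \<inter> x" using False by auto
    then have "(\<Sum>x\<in>Pow (insert a D). (-1::real) ^ card (u \<inter> x)) = 2 * (\<Sum>x\<in>Pow D. (-1::real) ^ card (u \<inter> x))"
      using eq by (simp add: sum_distrib_left)
    also have "\<dots> = (if u \<inter> D = {} then 2 ^ Suc (card D) else 0)" using insert(3)[of u] by simp
    finally show ?thesis using False insert(1,2) by auto
  qed
qed

lemma parity:
  assumes "finite x"
  shows "(-1::real) ^ card (s \<inter> x) * (-1) ^ card (t \<inter> x) = (-1) ^ card (((s - t) \<union> (t - s)) \<inter> x)"
proof -
  have fin: "finite (A \<inter> x)" for A using assms by simp
  have e1: "s \<inter> x = ((s - t) \<inter> x) \<union> (s \<inter> t \<inter> x)" by blast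
  have e2: "t \<inter> x = ((t - s) \<inter> x) \<union> (s \<inter> t \<inter> x)" by blast
  have e3: "((s - t) \<union> (t - s)) \<inter> x = ((s - t) \<inter> x) \<union> ((t - s) \<inter> x)" by blast
  have c1: "card (s \<inter> x) = card ((s - t) \<inter> x) + card (s \<inter> t \<inter> x)"
    by (subst e1, rule card_Un_disjoint) (use assms in auto)
  have c2: "card (t \<inter> x) = card ((t - s) \<inter> x) + card (s \<inter> t \<inter> x)"
    by (subst e2, rule card_Un_disjoint) (use assms in auto)
  have c3: "card (((s - t) \<union> (t - s)) \<inter> x) = card ((s - t) \<inter> x) + card ((t - s) \<inter> x)"
    by (subst e3, rule card_Un_disjoint) (use assms in auto)
  have "card (s \<inter> x) + card (t \<inter> x) = card (((s - t) \<union> (t - s)) \<inter> x) + 2 * card (s \<inter> t \<inter> x)"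
    using c1 c2 c3 by simp
  then have "(-1::real) ^ (card (s \<inter> x) + card (t \<inter> x)) = (-1) ^ card (((s - t) \<union> (t - s)) \<inter> x)"
    by (simp add: power_add power_mult)
  then show ?thesis by (simp add: power_add)
qed

lemma w_sq: "(2 powr (- real d / 2)) * (2 powr (- real d / 2)) = 1 / 2 ^ d"
proof -
  have "(2 powr (- real d / 2)) * (2 powr (- real d / 2)) = 2 powr (- real d)"
    by (simp add: powr_add[symmetric])
  also have "\<dots> = 1 / 2 powr (real d)" by (simp add: powr_minus divide_inverse)
  also have "\<dots> = 1 / 2 ^ d" by (simp add: powr_realpow)
  finally show ?thesis .
qed

lemma walsh_mult: "walsh d s x * walsh d t x = (1 / 2 ^ d) * (-1) ^ card (((s - t) \<union> (t - s)) \<inter> x)"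
  if "finite x" for x
proof -
  have "walsh d s x * walsh d t x = ((2 powr (- real d / 2)) * (2 powr (- real d / 2))) *
      ((-1::real) ^ card (s \<inter> x) * (-1) ^ card (t \<inter> x))"
    unfolding walsh_def by (simp add: algebra_simps)
  then show ?thesis using parity[OF that, of s t] w_sq[of d] by simp
qed

lemma walsh_orth:
  assumes "s \<subseteq> {..<d}" "t \<subseteq> {..<d}"
  shows "(\<Sum>x\<in>cube d. walsh d s x * walsh d t x) = (if s = t then 1 else 0)"
proof -
  have "(\<Sum>x\<in>cube d. walsh d s x * walsh d t x) =
     (\<Sum>x\<in>Pow {..<d}. (1 / 2 ^ d) * (-1::real) ^ card (((s - t) \<union> (t - s)) \<inter> x))"
    unfolding cube_def
  proof (rule sum.cong)
    fix x assume "x \<in> Pow {..<d}"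
    then have "finite x" by (meson PowD finite_lessThan finite_subset)
    then show "walsh d s x * walsh d t x = (1 / 2 ^ d) * (-1::real) ^ card (((s - t) \<union> (t - s)) \<inter> x)"
      by (rule walsh_mult)
  qed simp
  also have "\<dots> = (1 / 2 ^ d) * (if ((s - t) \<union> (t - s)) \<inter> {..<d} = {} then 2 ^ card {..<d} else 0)"
    using char_sum[of "{..<d}" "(s - t) \<union> (t - s)"] by (simp add: sum_divide_distrib[symmetric])
  also have "(((s - t) \<union> (t - s)) \<inter> {..<d} = {}) = (s = t)" using assms by auto
  finally show ?thesis by simp
qed

lemma walsh_empty: "walsh d {} x = 2 powr (- real d / 2)"
  unfolding walsh_def by simp

lemma walsh_sum:
  assumes "s \<subseteq> {..<d}"
  shows "(\<Sum>x\<in>cube d. walsh d s x) = (if s = {} then 2 powr (real d / 2) else 0)"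
proof -
  have "(\<Sum>x\<in>cube d. walsh d s x) * 2 powr (- real d / 2) = (if s = {} then 1 else 0)"
    using walsh_orth[OF assms, of "{}"] by (simp add: walsh_empty sum_distrib_right)
  moreover have "2 powr (real d / 2) * 2 powr (- real d / 2) = 1"
    by (simp add: powr_add[symmetric])
  ultimately have "(\<Sum>x\<in>cube d. walsh d s x) * 2 powr (- real d / 2) =
       (if s = {} then 2 powr (real d / 2) else 0) * 2 powr (- real d / 2)" by simp
  then show ?thesis by (subst (asm) mult_right_cancel) auto
qed

lemma walsh_abs: "\<bar>walsh d s x\<bar> = 2 powr (- real d / 2)"
  unfolding walsh_def by (simp add: abs_mult)




lemma bessel:
  assumes "S \<subseteq> cube d"
  shows "(\<Sum>t\<in>S. (theta d h t)\<^sup>2) \<le> (\<Sum>x\<in>cube d. (h x)\<^sup>2)"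
proof -
  define c where "c t = theta d h t" for t
  define v where "v x = (\<Sum>t\<in>S. c t * walsh d t x)" for x
  have finC: "finite (cube d)" unfolding cube_def by simp
  have finS: "finite S" using assms finC finite_subset by blast
  have sub: "\<And>t. t \<in> S \<Longrightarrow> t \<subseteq> {..<d}" using assms unfolding cube_def by auto
  have A: "(\<Sum>x\<in>cube d. h x * v x) = (\<Sum>t\<in>S. (c t)\<^sup>2)"
  proof -
    have "(\<Sum>x\<in>cube d. h x * v x) = (\<Sum>x\<in>cube d. \<Sum>t\<in>S. c t * (h x * walsh d t x))"
      unfolding v_def by (simp add: sum_distrib_left algebra_simps)
    also have "\<dots> = (\<Sum>t\<in>S. \<Sum>x\<in>cube d. c t * (h x * walsh d t x))" by (rule sum.swap)
    also have "\<dots> = (\<Sum>t\<in>S. c t * c t)"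
      by (simp add: sum_distrib_left[symmetric] c_def theta_def)
    finally show ?thesis by (simp add: power2_eq_square)
  qed
  have B: "(\<Sum>x\<in>cube d. (v x)\<^sup>2) = (\<Sum>t\<in>S. (c t)\<^sup>2)"
  proof -
    have "(\<Sum>x\<in>cube d. (v x)\<^sup>2) = (\<Sum>x\<in>cube d. \<Sum>t\<in>S. \<Sum>u\<in>S. c t * c u * (walsh d t x * walsh d u x))"
      unfolding v_def power2_eq_square sum_product by (simp add: algebra_simps)
    also have "\<dots> = (\<Sum>t\<in>S. \<Sum>x\<in>cube d. \<Sum>u\<in>S. c t * c u * (walsh d t x * walsh d u x))"
      by (rule sum.swap)
    also have "\<dots> = (\<Sum>t\<in>S. \<Sum>u\<in>S. \<Sum>x\<in>cube d. c t * c u * (walsh d t x * walsh d u x))"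
      by (simp add: sum.swap[of _ "cube d"])
    also have "\<dots> = (\<Sum>t\<in>S. \<Sum>u\<in>S. c t * c u * (if t = u then 1 else 0))"
      by (intro sum.cong refl) (simp add: sum_distrib_left[symmetric] walsh_orth sub)
    also have "\<dots> = (\<Sum>t\<in>S. c t * c t)"
      by (simp add: finS if_distrib cong: if_cong)
    finally show ?thesis by (simp add: power2_eq_square)
  qed
  have "0 \<le> (\<Sum>x\<in>cube d. (h x - v x)\<^sup>2)" by (simp add: sum_nonneg)
  also have "\<dots> = (\<Sum>x\<in>cube d. (h x)\<^sup>2) - 2 * (\<Sum>x\<in>cube d. h x * v x) + (\<Sum>x\<in>cube d. (v x)\<^sup>2)"
    by (simp add: power2_diff sum.distrib sum_subtractf sum_distrib_left algebra_simps)
  finally show ?thesis using A B by (simp add: c_def)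
qed

lemma theta_diff: "theta d (\<lambda>x. f x - g x) t = theta d f t - theta d g t"
  unfolding theta_def by (simp add: sum_subtractf left_diff_distrib)

lemma sorted_desc_bound:
  fixes A :: "real multiset"
  assumes "i < size A" "size (filter_mset (\<lambda>y. v < y) A) \<le> i"
  shows "rev (sorted_list_of_multiset A) ! i \<le> v"
proof (rule ccontr)
  define xs where "xs = rev (sorted_list_of_multiset A)"
  assume "\<not> rev (sorted_list_of_multiset A) ! i \<le> v"
  then have gt: "v < xs ! i" unfolding xs_def by simp
  have len: "length xs = size A" unfolding xs_def
    by (metis length_rev mset_sorted_list_of_multiset size_mset)
  have srt: "sorted (sorted_list_of_multiset A)" by simp
  have mono: "xs ! i \<le> xs ! j" if "j \<le> i" for j
  proof -
    have "xs ! j = sorted_list_of_multiset A ! (length xs - Suc j)"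
      unfolding xs_def using that assms(1) len by (simp add: rev_nth xs_def)
    moreover have "xs ! i = sorted_list_of_multiset A ! (length xs - Suc i)"
      unfolding xs_def using that assms(1) len by (simp add: rev_nth xs_def)
    moreover have "length xs - Suc i \<le> length xs - Suc j" using that by simp
    moreover have "length xs - Suc j < length (sorted_list_of_multiset A)"
      using assms(1) len that unfolding xs_def by simp
    ultimately show ?thesis using sorted_nth_mono[OF srt] by metis
  qed
  have allgt: "\<forall>y\<in>set (take (Suc i) xs). v < y"
  proof
    fix y assume "y \<in> set (take (Suc i) xs)"
    then obtain j where "j < length (take (Suc i) xs)" "y = take (Suc i) xs ! j"
      by (metis in_set_conv_nth)
    then have "j \<le> i" "y = xs ! j" by auto
    then show "v < y" using mono gt by fastforce
  qed
  have "Suc i = length (filter (\<lambda>y. v < y) (take (Suc i) xs))"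
    using allgt assms(1) len by simp
  also have "\<dots> \<le> length (filter (\<lambda>y. v < y) xs)"
  proof -
    have "filter (\<lambda>y. v < y) xs = filter (\<lambda>y. v < y) (take (Suc i) xs) @ filter (\<lambda>y. v < y) (drop (Suc i) xs)"
      by (metis append_take_drop_id filter_append)
    then show ?thesis by (metis le_add1 length_append)
  qed
  also have "\<dots> = size (filter_mset (\<lambda>y. v < y) A)"
    unfolding xs_def by (metis mset_filter mset_rev mset_sorted_list_of_multiset size_mset)
  finally show False using assms(2) by simp
qed

lemma size_filter_coeffs:
  "size (filter_mset P (image_mset (\<lambda>s. \<bar>theta d g s\<bar>) (mset_set (cube d)))) =
     card {s\<in>cube d. P \<bar>theta d g s\<bar>}"
  by (simp add: filter_mset_image_mset cube_def)

lemma size_coeffs: "size (image_mset (\<lambda>s. \<bar>theta d g s\<bar>) (mset_set (cube d))) = 2 ^ d"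
  by (simp add: cube_def card_Pow)




definition fw :: "nat \<Rightarrow> real \<Rightarrow> nat set set \<Rightarrow> nat set \<Rightarrow> real" where
  "fw d a T x = 1 / 2 ^ d + a * (\<Sum>t\<in>T. walsh d t x)"

lemma finite_cube[simp]: "finite (cube d)" unfolding cube_def by simp
lemma card_cube: "card (cube d) = 2 ^ d" unfolding cube_def by (simp add: card_Pow)

lemma u_eq: "2 powr (- real d / 2) = ((2::real) ^ d) powr (-1/2)"
  by (simp add: powr_realpow[symmetric] powr_powr)

lemma u_pos: "0 < ((2::real) ^ d) powr (-1/2)" by simp

lemma fw_theta:
  assumes T: "T \<subseteq> cube d - {{}}" and t: "t \<in> cube d"
  shows "theta d (fw d a T) t = (if t = {} then 2 powr (- real d / 2) else 0) + (if t \<in> T then a else 0)"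
proof -
  have finT: "finite T" using T finite_subset by (metis Diff_subset finite_cube)
  have tsub: "t \<subseteq> {..<d}" using t unfolding cube_def by auto
  have ssub: "\<And>s. s \<in> T \<Longrightarrow> s \<subseteq> {..<d}" using T unfolding cube_def by auto
  have "theta d (fw d a T) t = (1 / 2 ^ d) * (\<Sum>x\<in>cube d. walsh d t x) +
        a * (\<Sum>s\<in>T. \<Sum>x\<in>cube d. walsh d s x * walsh d t x)"
    unfolding theta_def fw_def
    by (simp add: algebra_simps sum.distrib sum_distrib_left sum_distrib_right sum.swap[of _ T] sum_divide_distrib)
  also have "(\<Sum>s\<in>T. \<Sum>x\<in>cube d. walsh d s x * walsh d t x) = (\<Sum>s\<in>T. if s = t then 1 else 0)"
    by (intro sum.cong refl) (simp add: walsh_orth ssub tsub)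
  also have "\<dots> = (if t \<in> T then 1 else 0)" using finT by (simp add: sum.delta')
  also have "(1 / 2 ^ d) * (\<Sum>x\<in>cube d. walsh d t x) = (if t = {} then 2 powr (- real d / 2) else 0)"
  proof -
    have "(1 / 2 ^ d) * 2 powr (real d / 2) = 2 powr (- real d / 2)"
    proof -
      have "(2::real) ^ d = 2 powr (real d / 2) * 2 powr (real d / 2)"
        by (simp add: powr_add[symmetric] powr_realpow)
      moreover have "2 powr (- real d / 2) * 2 powr (real d / 2) = 1"
        by (simp add: powr_add[symmetric])
      ultimately show ?thesis by (simp add: field_simps)
    qed
    then show ?thesis by (simp add: walsh_sum tsub)
  qed
  finally show ?thesis by simp
qed

lemma fw_sum:
  assumes T: "T \<subseteq> cube d - {{}}"
  shows "(\<Sum>x\<in>cube d. fw d a T x) = 1"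
proof -
  have ssub: "\<And>s. s \<in> T \<Longrightarrow> s \<subseteq> {..<d}" using T unfolding cube_def by auto
  have "(\<Sum>x\<in>cube d. fw d a T x) = card (cube d) / 2 ^ d + a * (\<Sum>s\<in>T. \<Sum>x\<in>cube d. walsh d s x)"
    unfolding fw_def by (simp add: sum.distrib sum_distrib_left sum.swap[of _ T])
  also have "(\<Sum>s\<in>T. \<Sum>x\<in>cube d. walsh d s x) = 0"
    by (rule sum.neutral) (use T in \<open>auto simp: walsh_sum ssub\<close>)
  finally show ?thesis by (simp add: card_cube)
qed

lemma fw_lower:
  fixes a :: real
  assumes "finite T" "0 \<le> a"
  shows "fw d a T x \<ge> 1 / 2 ^ d - card T * a * 2 powr (- real d / 2)"
proof -
  have "\<bar>\<Sum>t\<in>T. walsh d t x\<bar> \<le> (\<Sum>t\<in>T. \<bar>walsh d t x\<bar>)" by (rule sum_abs)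
  also have "\<dots> = card T * 2 powr (- real d / 2)" by (simp add: walsh_abs)
  finally have "a * \<bar>\<Sum>t\<in>T. walsh d t x\<bar> \<le> a * (card T * 2 powr (- real d / 2))"
    using assms(2) by (rule mult_left_mono)
  moreover have "- (a * \<bar>\<Sum>t\<in>T. walsh d t x\<bar>) \<le> a * (\<Sum>t\<in>T. walsh d t x)"
    using abs_ge_minus_self[of "a * (\<Sum>t\<in>T. walsh d t x)"] assms(2) by (simp add: abs_mult)
  ultimately show ?thesis unfolding fw_def by (simp add: algebra_simps)
qed

lemma fw_Fd:
  assumes p: "0 < p" and T: "T \<subseteq> cube d - {{}}" and cT: "card T \<le> k" and a: "0 < a"
    and ab: "a \<le> ((2::real) ^ d) powr (-1/2) * (real k + 1) powr (-1/p)"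
  shows "fw d a T \<in> Fd d p"
proof -
  define u where "u = ((2::real) ^ d) powr (-1/2)"
  have upos: "0 < u" unfolding u_def by simp
  have finT: "finite T" using T finite_subset by (metis Diff_subset finite_cube)
  have ab': "a \<le> u * (real k + 1) powr (-1/p)" using ab unfolding u_def .
  have absth: "\<bar>theta d (fw d a T) s\<bar> = (if s = {} then u else if s \<in> T then a else 0)" if "s \<in> cube d" for s
  proof -
    have "2 powr (- (real d / 2)) = u" "2 powr (- real d / 2) = u" unfolding u_def using u_eq[of d] by simp_all
    then show ?thesis using fw_theta[OF T that, of a] T a upos by auto
  qed
  have au: "a \<le> u"
  proof -
    have "(real k + 1) powr (-1/p) \<le> (real k + 1) powr 0" using p by (intro powr_mono) auto
    then have "(real k + 1) powr (-1/p) \<le> 1" by simp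
    then have "u * (real k + 1) powr (-1/p) \<le> u * 1" using upos by (intro mult_left_mono) auto
    then show ?thesis using ab' by linarith
  qed
  show ?thesis unfolding Fd_def
  proof (intro CollectI ballI)
    fix m assume m: "m \<in> {1..(2::nat)^d}"
    define v where "v = u * real m powr (-1/p)"
    have vpos: "0 \<le> v" unfolding v_def using upos by simp
    have sub: "{s\<in>cube d. v < \<bar>theta d (fw d a T) s\<bar>} \<subseteq> {s. s = {} \<and> v < u} \<union> {s\<in>T. v < a}"
    proof
      fix s assume "s \<in> {s\<in>cube d. v < \<bar>theta d (fw d a T) s\<bar>}"
      then have s: "s \<in> cube d" "v < \<bar>theta d (fw d a T) s\<bar>" by auto
      show "s \<in> {s. s = {} \<and> v < u} \<union> {s\<in>T. v < a}"
        using s absth[OF s(1)] vpos by (auto split: if_splits)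
    qed
    have cnt: "card {s\<in>cube d. v < \<bar>theta d (fw d a T) s\<bar>} \<le> m - 1"
    proof (cases "m = 1")
      case True
      then have "v = u" unfolding v_def by simp
      then have "{s. s = {} \<and> v < u} \<union> {s\<in>T. v < a} = {}" using au by auto
      then have "{s\<in>cube d. v < \<bar>theta d (fw d a T) s\<bar>} = {}" using sub by blast
      then show ?thesis by (simp only: card.empty)
    next
      case False
      then have m2: "m \<ge> 2" using m by auto
      show ?thesis
      proof (cases "m \<le> k + 1")
        case True
        have "(real k + 1) powr (-1/p) \<le> real m powr (-1/p)"
          using True m2 p by (intro powr_mono2') (auto simp: divide_nonneg_pos)
        then have "u * (real k + 1) powr (-1/p) \<le> u * real m powr (-1/p)" using upos by (intro mult_left_mono) auto
        then have "a \<le> v" using ab' unfolding v_def by linarith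
        then have "{s. s = {} \<and> v < u} \<union> {s\<in>T. v < a} \<subseteq> {{}}" by auto
        then have "card {s\<in>cube d. v < \<bar>theta d (fw d a T) s\<bar>} \<le> card {{}::nat set}"
          using sub by (intro card_mono) auto
        then show ?thesis using m2 by simp
      next
        case False
        have "card {s\<in>cube d. v < \<bar>theta d (fw d a T) s\<bar>} \<le> card (insert {} T)"
          using sub finT by (intro card_mono) auto
        also have "\<dots> \<le> Suc (card T)" by (simp add: card_insert_le_m1 card_insert_if finT)
        finally show ?thesis using False cT by simp
      qed
    qed
    have mlt: "m - 1 < 2 ^ d" using m by (cases m) auto
    have "sorted_coeffs d (fw d a T) ! (m - 1) \<le> v"
      unfolding sorted_coeffs_def
      by (rule sorted_desc_bound) (use mlt cnt in \<open>simp_all add: size_filter_coeffs size_coeffs card_cube\<close>)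
    then show "sorted_coeffs d (fw d a T) ! (m - 1) \<le> (2 ^ d) powr (-1/2) * (real m) powr (-1/p)"
      unfolding v_def u_def by simp
  qed
qed




lemma pw_ineq:
  fixes P Q t :: real
  assumes "0 < Q" "0 < t"
  shows "P \<le> (1 + t/2) * Q + (P - Q)\<^sup>2 / (2 * t * Q)"
proof -
  have eq: "(1 + t/2) * Q + (P - Q)\<^sup>2 / (2 * t * Q) - P = (P - Q - t * Q)\<^sup>2 / (2 * t * Q)"
    using assms by (simp add: field_simps power2_eq_square)
  have "0 \<le> (P - Q - t * Q)\<^sup>2 / (2 * t * Q)" using assms by simp
  then show ?thesis using eq by linarith
qed

lemma test_bound:
  fixes Q :: "'x \<Rightarrow> real" and P :: "nat \<Rightarrow> 'x \<Rightarrow> real" and \<psi> :: "'x \<Rightarrow> nat"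
    and B :: nat and cc :: real
  assumes fin: "finite Xs" and Qpos: "\<And>X. X \<in> Xs \<Longrightarrow> 0 < Q X" and Qs: "sum Q Xs = 1"
    and Ps: "\<And>j. j < B \<Longrightarrow> sum (P j) Xs = 1"
    and chi: "\<And>j. j < B \<Longrightarrow> (\<Sum>X\<in>Xs. (P j X)\<^sup>2 / Q X) \<le> 1 + cc"
    and chib: "cc \<le> (real B + 1) / 16" and B: "B \<ge> 1"
  shows "(\<Sum>j<B. \<Sum>X\<in>Xs. P j X * of_bool (\<psi> X = j)) + (\<Sum>X\<in>Xs. Q X * of_bool (\<psi> X = B))
           \<le> 3/4 * (real B + 1)"
proof -
  define t :: real where "t = (real B + 1) / 4"
  have tpos: "0 < t" unfolding t_def by simp
  define D where "D j = (\<Sum>X\<in>Xs. Q X * of_bool (\<psi> X = j))" for j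
  have Dnn: "0 \<le> D j" for j unfolding D_def using Qpos by (intro sum_nonneg) (auto simp: less_imp_le)
  have step: "(\<Sum>X\<in>Xs. P j X * of_bool (\<psi> X = j)) \<le> (1 + t/2) * D j + cc / (2 * t)" if j: "j < B" for j
  proof -
    have "(\<Sum>X\<in>Xs. P j X * of_bool (\<psi> X = j)) \<le>
          (\<Sum>X\<in>Xs. (1 + t/2) * (Q X * of_bool (\<psi> X = j)) + (P j X - Q X)\<^sup>2 / (2 * t * Q X))"
    proof (rule sum_mono)
      fix X assume X: "X \<in> Xs"
      have nn: "0 \<le> (P j X - Q X)\<^sup>2 / (2 * t * Q X)" using Qpos[OF X] tpos by simp
      show "P j X * of_bool (\<psi> X = j) \<le> (1 + t/2) * (Q X * of_bool (\<psi> X = j)) + (P j X - Q X)\<^sup>2 / (2 * t * Q X)"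
        using pw_ineq[OF Qpos[OF X] tpos, of "P j X"] nn by auto
    qed
    also have "\<dots> = (1 + t/2) * D j + (\<Sum>X\<in>Xs. (P j X - Q X)\<^sup>2 / Q X) / (2 * t)"
      unfolding D_def by (simp add: sum.distrib sum_distrib_left sum_divide_distrib algebra_simps)
    also have "(\<Sum>X\<in>Xs. (P j X - Q X)\<^sup>2 / Q X) = (\<Sum>X\<in>Xs. (P j X)\<^sup>2 / Q X - 2 * P j X + Q X)"
    proof (rule sum.cong)
      fix X assume X: "X \<in> Xs"
      show "(P j X - Q X)\<^sup>2 / Q X = (P j X)\<^sup>2 / Q X - 2 * P j X + Q X"
        using Qpos[OF X] by (simp add: field_simps power2_eq_square)
    qed simp
    also have "\<dots> = (\<Sum>X\<in>Xs. (P j X)\<^sup>2 / Q X) - 1"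
      using Ps[OF j] Qs by (simp add: sum.distrib sum_subtractf sum_distrib_left[symmetric])
    also have "(\<Sum>X\<in>Xs. (P j X)\<^sup>2 / Q X) - 1 \<le> cc" using chi[OF j] by simp
    finally show ?thesis using tpos by (simp add: divide_right_mono)
  qed
  have "(\<Sum>j<B. \<Sum>X\<in>Xs. P j X * of_bool (\<psi> X = j)) \<le> (\<Sum>j<B. (1 + t/2) * D j + cc / (2 * t))"
    by (rule sum_mono) (rule step, simp)
  also have "\<dots> = (1 + t/2) * (\<Sum>j<B. D j) + B * (cc / (2 * t))"
    by (simp add: sum.distrib sum_distrib_left)
  finally have s1: "(\<Sum>j<B. \<Sum>X\<in>Xs. P j X * of_bool (\<psi> X = j)) \<le> (1 + t/2) * (\<Sum>j<B. D j) + B * (cc / (2 * t))" .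
  have s2: "(\<Sum>X\<in>Xs. Q X * of_bool (\<psi> X = B)) \<le> (1 + t/2) * D B"
    using Dnn[of B] tpos unfolding D_def[symmetric] by (simp add: algebra_simps)
  have sD: "(\<Sum>j<B. D j) + D B \<le> 1"
  proof -
    have "(\<Sum>j<B. D j) + D B = (\<Sum>j\<in>{..B}. D j)" by (simp add: lessThan_Suc_atMost[symmetric])
    also have "\<dots> = (\<Sum>X\<in>Xs. \<Sum>j\<in>{..B}. Q X * of_bool (\<psi> X = j))"
      unfolding D_def by (rule sum.swap)
    also have "\<dots> = (\<Sum>X\<in>Xs. Q X * (\<Sum>j\<in>{..B}. of_bool (\<psi> X = j)))"
      by (simp only: sum_distrib_left)
    also have "\<dots> \<le> (\<Sum>X\<in>Xs. Q X * 1)"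
    proof (rule sum_mono)
      fix X assume X: "X \<in> Xs"
      have "(\<Sum>j\<in>{..B}. (of_bool (\<psi> X = j) :: real)) = real (card ({..B} \<inter> {\<psi> X}))"
        by simp
      also have "card ({..B} \<inter> {\<psi> X}) \<le> card {\<psi> X}" by (intro card_mono) auto
      then have "real (card ({..B} \<inter> {\<psi> X})) \<le> 1" by simp
      finally show "Q X * (\<Sum>j\<in>{..B}. of_bool (\<psi> X = j)) \<le> Q X * 1"
        using Qpos[OF X] by (intro mult_left_mono) auto
    qed
    finally show ?thesis using Qs by simp
  qed
  have chit: "cc / (2 * t) \<le> 1/8"
    using chib tpos unfolding t_def by (simp add: field_simps)
  have "B * (cc / (2 * t)) \<le> B * (1/8)" using chit by (intro mult_left_mono) auto
  then have b8: "B * (cc / (2 * t)) \<le> B / 8" by simp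
  have e: "(1 + t/2) * ((\<Sum>j<B. D j) + D B) = (1+t/2)*(\<Sum>j<B. D j) + (1+t/2)*D B"
    by (simp add: distrib_left)
  have "(1 + t/2) * ((\<Sum>j<B. D j) + D B) \<le> (1 + t/2) * 1"
    using sD tpos by (intro mult_left_mono) auto
  then have "(\<Sum>j<B. \<Sum>X\<in>Xs. P j X * of_bool (\<psi> X = j)) + (\<Sum>X\<in>Xs. Q X * of_bool (\<psi> X = B))
      \<le> (1 + t/2) + B / 8"
    using s1 s2 b8 e by (simp only: mult_1_right)
  also have "\<dots> \<le> 3/4 * (real B + 1)" proof - have "real B \<ge> 1" using B by simp moreover have "(real B + 1) / 4 / 2 = (real B + 1) / 8" by simp ultimately show ?thesis unfolding t_def by (simp add: field_simps) qed
  finally show ?thesis .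
qed

lemma loss_block:
  fixes y :: "nat \<Rightarrow> real" and a :: real
  assumes a: "0 < a" and j0: "j0 \<le> B"
  shows "a\<^sup>2/4 * (1 - of_bool ((if \<exists>j<B. a/2 \<le> y j then LEAST j. j < B \<and> a/2 \<le> y j else B) = j0))
         \<le> (\<Sum>j<B. (y j - (if j = j0 then a else 0))\<^sup>2)"
proof -
  define \<psi> where "\<psi> = (if \<exists>j<B. a/2 \<le> y j then LEAST j. j < B \<and> a/2 \<le> y j else B)"
  have nn: "0 \<le> (\<Sum>j<B. (y j - (if j = j0 then a else 0))\<^sup>2)" by (simp add: sum_nonneg)
  have trm: "(y j - (if j = j0 then a else 0))\<^sup>2 \<le> (\<Sum>j<B. (y j - (if j = j0 then a else 0))\<^sup>2)"
    if "j < B" for j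
    by (rule member_le_sum[where f="\<lambda>j. (y j - (if j = j0 then a else 0))\<^sup>2"]) (use that in auto)
  have main: "a\<^sup>2/4 \<le> (\<Sum>j<B. (y j - (if j = j0 then a else 0))\<^sup>2)" if ne: "\<psi> \<noteq> j0"
  proof (cases "\<exists>j<B. a/2 \<le> y j")
    case True
    define l where "l = (LEAST j. j < B \<and> a/2 \<le> y j)"
    have l: "l < B \<and> a/2 \<le> y l" unfolding l_def using True by (metis (mono_tags, lifting) LeastI)
    have "\<psi> = l" unfolding \<psi>_def l_def using True by simp
    then have "l \<noteq> j0" using ne by simp
    then have "(y l - (if l = j0 then a else 0))\<^sup>2 = (y l)\<^sup>2" by simp
    moreover have "(a/2)\<^sup>2 \<le> (y l)\<^sup>2" using l a by (intro power_mono) auto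
    ultimately show ?thesis using trm[of l] l by (simp add: power_divide)
  next
    case False
    then have "\<psi> = B" unfolding \<psi>_def by (rule if_not_P)
    then have j0B: "j0 < B" using ne j0 by simp
    then have "y j0 < a/2" using False by auto
    then have "(a/2)\<^sup>2 \<le> (a - y j0)\<^sup>2" using a by (intro power_mono) auto
    moreover have "(y j0 - a)\<^sup>2 = (a - y j0)\<^sup>2" by (simp add: power2_commute)
    ultimately show ?thesis using trm[OF j0B] by (simp add: power_divide power2_commute)
  qed
  show ?thesis
  proof (cases "\<psi> = j0")
    case True then show ?thesis using nn unfolding \<psi>_def by simp
  next
    case False then show ?thesis using main unfolding \<psi>_def by simp
  qed
qed

lemma sum_PiE_split:
  assumes b: "b \<in> K" and fK: "finite K" and fJ: "finite J"
  shows "(\<Sum>\<omega>\<in>PiE K (\<lambda>_. J). G \<omega>) = (\<Sum>\<omega>'\<in>PiE (K - {b}) (\<lambda>_. J). \<Sum>j\<in>J. G (\<omega>'(b := j)))"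
proof -
  have Keq: "K = insert b (K - {b})" using b by auto
  have "PiE K (\<lambda>_. J) = (\<lambda>(y, g). g(b := y)) ` (J \<times> PiE (K - {b}) (\<lambda>_. J))"
    by (subst Keq, subst PiE_insert_eq) simp
  then have "(\<Sum>\<omega>\<in>PiE K (\<lambda>_. J). G \<omega>) = (\<Sum>z\<in>J \<times> PiE (K - {b}) (\<lambda>_. J). G ((\<lambda>(y, g). g(b := y)) z))"
    using inj_combinator[of b "K - {b}" "\<lambda>_. J"] by (simp add: sum.reindex)
  also have "\<dots> = (\<Sum>(j, \<omega>')\<in>J \<times> PiE (K - {b}) (\<lambda>_. J). G (\<omega>'(b := j)))"
    by (intro sum.cong) auto
  also have "\<dots> = (\<Sum>j\<in>J. \<Sum>\<omega>'\<in>PiE (K - {b}) (\<lambda>_. J). G (\<omega>'(b := j)))"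
    by (rule sum.cartesian_product[symmetric])
  also have "\<dots> = (\<Sum>\<omega>'\<in>PiE (K - {b}) (\<lambda>_. J). \<Sum>j\<in>J. G (\<omega>'(b := j)))"
    by (rule sum.swap)
  finally show ?thesis .
qed

lemma sum_prod_PiE_const:
  fixes h :: "'a \<Rightarrow> real"
  assumes "finite C"
  shows "(\<Sum>X\<in>PiE {..<n} (\<lambda>_. C). \<Prod>i<n. h (X i)) = (\<Sum>x\<in>C. h x) ^ n"
  using prod_sum_PiE[of "{..<n}" "\<lambda>_. C" "\<lambda>i x. h x"] assms by simp

lemma walsh_sq: "walsh d s x * walsh d s x = 1 / 2 ^ d"
  unfolding walsh_def using w_sq[of d] by (simp add: algebra_simps power_mult_distrib[symmetric]) 

lemma chi_fw:
  assumes T: "T \<subseteq> cube d - {{}}" and s: "s \<in> cube d - {{}}" "s \<notin> T"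
    and lo: "\<And>x. x \<in> cube d \<Longrightarrow> 1 / (2 * 2 ^ d) \<le> fw d a T x"
  shows "(\<Sum>x\<in>cube d. (fw d a (insert s T) x)\<^sup>2 / fw d a T x) \<le> 1 + 2 * 2 ^ d * a\<^sup>2"
proof -
  have finT: "finite T" using T finite_subset by (metis Diff_subset finite_cube)
  have ssub: "s \<subseteq> {..<d}" using s unfolding cube_def by auto
  have ins: "fw d a (insert s T) x = fw d a T x + a * walsh d s x" for x
    unfolding fw_def using finT s by (simp add: algebra_simps)
  have qpos: "0 < fw d a T x" if "x \<in> cube d" for x
    using lo[OF that] by (smt (verit) divide_pos_pos zero_less_power)
  define g where "g x = walsh d s x * walsh d s x / fw d a T x" for x
  have "(\<Sum>x\<in>cube d. (fw d a (insert s T) x)\<^sup>2 / fw d a T x) =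
        (\<Sum>x\<in>cube d. fw d a T x + 2 * a * walsh d s x + a\<^sup>2 * g x)"
  proof (rule sum.cong)
    fix x assume x: "x \<in> cube d"
    show "(fw d a (insert s T) x)\<^sup>2 / fw d a T x =
        fw d a T x + 2 * a * walsh d s x + a\<^sup>2 * g x"
      unfolding ins g_def using qpos[OF x] by (simp add: field_simps power2_eq_square)
  qed simp
  also have "\<dots> = 1 + 2 * a * 0 + a\<^sup>2 * (\<Sum>x\<in>cube d. g x)"
    using fw_sum[OF T, of a] walsh_sum[OF ssub] s
    by (simp add: sum.distrib sum_distrib_left[symmetric])
  finally have eq1: "(\<Sum>x\<in>cube d. (fw d a (insert s T) x)\<^sup>2 / fw d a T x) = 1 + a\<^sup>2 * (\<Sum>x\<in>cube d. g x)" by simp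
  have "(\<Sum>x\<in>cube d. g x) \<le> (\<Sum>x\<in>cube d. 2)"
  proof (rule sum_mono)
    fix x assume x: "x \<in> cube d"
    have "1 / fw d a T x \<le> 2 * 2 ^ d"
      using lo[OF x] qpos[OF x] by (simp add: field_simps)
    show "g x \<le> 2"
      unfolding g_def walsh_sq using lo[OF x] qpos[OF x] by (simp add: field_simps)
  qed
  also have "(\<Sum>x\<in>cube d. (2::real)) = 2 * 2 ^ d" by (simp add: card_cube)
  finally have "a\<^sup>2 * (\<Sum>x\<in>cube d. g x) \<le> a\<^sup>2 * (2 * 2 ^ d)" by (intro mult_left_mono) auto
  then show ?thesis using eq1 by (simp add: algebra_simps)
qed




lemma idx_lt:
  fixes b j k B :: nat
  assumes "b < k" "j < B"
  shows "b * B + j < k * B"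
proof -
  have "b * B + j < b * B + B" using assms by simp
  also have "\<dots> = Suc b * B" by simp
  also have "\<dots> \<le> k * B" using assms by (intro mult_le_mono1) simp
  finally show ?thesis .
qed

lemma idx_inj:
  fixes b j b' j' B :: nat
  assumes "j < B" "j' < B" "b * B + j = b' * B + j'"
  shows "b = b' \<and> j = j'"
proof -
  have "(b * B + j) div B = b" using assms(1) by simp
  moreover have "(b' * B + j') div B = b'" using assms(2) by simp
  moreover have "(b * B + j) mod B = j" using assms(1) by simp
  moreover have "(b' * B + j') mod B = j'" using assms(2) by simp
  ultimately show ?thesis using assms(3) by metis
qed

lemma main_lb:
  fixes d k B n :: nat and a p :: real
  assumes p: "0 < p" and B: "B \<ge> 1" and kB: "k * B \<le> 2 ^ d - 1" and a: "0 < a"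
    and pos: "real k * a \<le> ((2::real) ^ d) powr (-1/2) / 2"
    and cls: "a \<le> ((2::real) ^ d) powr (-1/2) * (real k + 1) powr (-1/p)"
    and ex: "exp (2 * real n * 2 ^ d * a\<^sup>2) \<le> 1 + (real B + 1) / 16"
  shows "ereal (real k * a\<^sup>2 / 16) \<le> minimax_risk d p n"
proof -
  define S0 where "S0 = cube d - {{}}"
  have finS0: "finite S0" unfolding S0_def by simp
  have cS0: "card S0 = 2 ^ d - 1"
    unfolding S0_def by (subst card_Diff_singleton) (auto simp: card_cube cube_def card_Pow)
  obtain h where h: "bij_betw h {0..<card S0} S0" using ex_bij_betw_nat_finite[OF finS0] by blast
  define g where "g b j = h (b * B + j)" for b j
  have idx: "b * B + j < card S0" if "b < k" "j < B" for b j
    using idx_lt[OF that] kB cS0 by simp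
  have gS0: "g b j \<in> S0" if "b < k" "j < B" for b j
    using h idx[OF that] unfolding g_def bij_betw_def by auto
  have ginj: "b = b' \<and> j = j'" if "b < k" "j < B" "b' < k" "j' < B" "g b j = g b' j'" for b j b' j'
  proof -
    have "b * B + j = b' * B + j'"
      using h idx[OF that(1,2)] idx[OF that(3,4)] that(5) unfolding g_def bij_betw_def inj_on_def by auto
    then show ?thesis using idx_inj that(2,4) by blast
  qed
  define \<Omega> where "\<Omega> = PiE {..<k} (\<lambda>_. {..B})"
  define T where "T \<omega> = (\<lambda>b. g b (\<omega> b)) ` {b \<in> {..<k}. \<omega> b < B}" for \<omega> :: "nat \<Rightarrow> nat"
  define F where "F \<omega> = fw d a (T \<omega>)" for \<omega>
  define Xs where "Xs = PiE {..<n} (\<lambda>_. cube d)"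
  define P where "P \<omega> X = (\<Prod>i<n. F \<omega> (X i))" for \<omega> X
  define u where "u = (2::real) powr (- real d / 2)"
  have uu: "u * u = 1 / 2 ^ d" unfolding u_def by (rule w_sq)
  have upos: "0 < u" unfolding u_def by simp
  have ka: "real k * a \<le> u / 2" using pos unfolding u_def u_eq .
  have TS0: "T \<omega> \<subseteq> S0" for \<omega> unfolding T_def using gS0 by auto
  have TS0': "T \<omega> \<subseteq> cube d - {{}}" for \<omega> using TS0 unfolding S0_def .
  have finT: "finite (T \<omega>)" for \<omega> using TS0 finS0 finite_subset by blast
  have cT: "card (T \<omega>) \<le> k" for \<omega>
  proof -
    have "card (T \<omega>) \<le> card {b \<in> {..<k}. \<omega> b < B}" unfolding T_def by (rule card_image_le) simp
    also have "\<dots> \<le> card {..<k}" by (rule card_mono) auto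
    finally show ?thesis by simp
  qed
  have Flow: "1 / (2 * 2 ^ d) \<le> F \<omega> x" for \<omega> x
  proof -
    have "F \<omega> x \<ge> 1 / 2 ^ d - card (T \<omega>) * a * u"
      unfolding F_def u_def by (rule fw_lower) (use finT a in auto)
    moreover have "card (T \<omega>) * a * u \<le> real k * a * u"
      using cT[of \<omega>] a upos by (intro mult_right_mono) auto
    moreover have "real k * a * u \<le> (u / 2) * u" using ka upos by (intro mult_right_mono) auto
    moreover have "(u / 2) * u = 1 / (2 * 2 ^ d)" using uu by (simp add: field_simps)
    moreover have "1 / 2 ^ d - 1 / (2 * 2 ^ d) = 1 / (2 * (2::real) ^ d)" by (simp add: field_simps)
    ultimately show ?thesis by linarith
  qed
  have Fpos: "0 < F \<omega> x" for \<omega> x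
    using Flow[of \<omega> x] by (smt (verit) divide_pos_pos zero_less_power)
  have Fsum: "sum (F \<omega>) (cube d) = 1" for \<omega> unfolding F_def by (rule fw_sum[OF TS0'])
  have Fin: "F \<omega> \<in> Fplus1 d p" for \<omega>
    unfolding Fplus1_def using fw_Fd[OF p TS0' cT a cls] Fpos Fsum unfolding F_def
    by (auto simp: less_imp_le)
  have finXs: "finite Xs" unfolding Xs_def by (simp add: finite_PiE)
  have Psum: "sum (P \<omega>) Xs = 1" for \<omega>
    unfolding P_def Xs_def using sum_prod_PiE_const[where C="cube d" and n=n and h="F \<omega>"] Fsum by simp
  have Ppos: "0 < P \<omega> X" for \<omega> X unfolding P_def using Fpos by (simp add: prod_pos)
  have memT: "(g b j \<in> T \<omega>) = (\<omega> b = j)" if "\<omega> \<in> \<Omega>" "b < k" "j < B" for \<omega> b j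
  proof
    assume "g b j \<in> T \<omega>"
    then obtain b' where b': "b' < k" "\<omega> b' < B" "g b j = g b' (\<omega> b')" unfolding T_def by auto
    then show "\<omega> b = j" using ginj[OF that(2,3) b'(1,2) b'(3)] by simp
  next
    assume "\<omega> b = j"
    then show "g b j \<in> T \<omega>" unfolding T_def using that by auto
  qed
  have thF: "theta d (F \<omega>) (g b j) = (if j = \<omega> b then a else 0)" if "\<omega> \<in> \<Omega>" "b < k" "j < B" for \<omega> b j
  proof -
    have "g b j \<in> cube d" "g b j \<noteq> {}" using gS0[OF that(2,3)] unfolding S0_def by auto
    then show ?thesis unfolding F_def using fw_theta[OF TS0' \<open>g b j \<in> cube d\<close>, of a \<omega>] memT[OF that]
      by auto
  qed
  have finO: "finite \<Omega>" unfolding \<Omega>_def by (simp add: finite_PiE)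
  have neO: "\<Omega> \<noteq> {}" unfolding \<Omega>_def by (simp add: PiE_eq_empty_iff)
  show ?thesis
    unfolding minimax_risk_def
  proof (rule INF_greatest)
    fix est :: "(nat \<Rightarrow> nat set) \<Rightarrow> nat set \<Rightarrow> real"
    define y where "y X b j = theta d (est X) (g b j)" for X b j
    define \<psi> where "\<psi> X b = (if \<exists>j<B. a/2 \<le> y X b j then LEAST j. j < B \<and> a/2 \<le> y X b j else B)" for X b
    have loss: "(\<Sum>b<k. \<Sum>j<B. (y X b j - (if j = \<omega> b then a else 0))\<^sup>2) \<le> (\<Sum>x\<in>cube d. (est X x - F \<omega> x)\<^sup>2)"
      if \<omega>: "\<omega> \<in> \<Omega>" for \<omega> X
    proof -
      define R where "R = {..<k} \<times> {..<B}"
      have injR: "inj_on (\<lambda>(b, j). g b j) R" unfolding R_def inj_on_def using ginj by auto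
      have SR: "(\<lambda>(b, j). g b j) ` R \<subseteq> cube d" unfolding R_def using gS0 S0_def by auto
      have "(\<Sum>b<k. \<Sum>j<B. (y X b j - (if j = \<omega> b then a else 0))\<^sup>2) =
            (\<Sum>(b, j)\<in>R. (y X b j - (if j = \<omega> b then a else 0))\<^sup>2)"
        unfolding R_def by (rule sum.cartesian_product)
      also have "\<dots> = (\<Sum>(b, j)\<in>R. (theta d (\<lambda>x. est X x - F \<omega> x) (g b j))\<^sup>2)"
        by (intro sum.cong refl) (auto simp: R_def theta_diff thF[OF \<omega>] y_def)
      also have "\<dots> = (\<Sum>t\<in>(\<lambda>(b, j). g b j) ` R. (theta d (\<lambda>x. est X x - F \<omega> x) t)\<^sup>2)"
        using injR by (simp add: sum.reindex case_prod_beta')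
      also have "\<dots> \<le> (\<Sum>x\<in>cube d. (est X x - F \<omega> x)\<^sup>2)" by (rule bessel[OF SR])
      finally show ?thesis .
    qed
    have riskO: "(\<Sum>b<k. a\<^sup>2/4 * (1 - (\<Sum>X\<in>Xs. P \<omega> X * of_bool (\<psi> X b = \<omega> b)))) \<le> risk d n est (F \<omega>)"
      if \<omega>: "\<omega> \<in> \<Omega>" for \<omega>
    proof -
      have "(\<Sum>b<k. a\<^sup>2/4 * (1 - (\<Sum>X\<in>Xs. P \<omega> X * of_bool (\<psi> X b = \<omega> b)))) =
            (\<Sum>X\<in>Xs. P \<omega> X * (\<Sum>b<k. a\<^sup>2/4 * (1 - of_bool (\<psi> X b = \<omega> b))))"
      proof -
        define c where "c = a\<^sup>2/4"
        define I where "I X b = (of_bool (\<psi> X b = \<omega> b) :: real)" for X b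
        have "(\<Sum>X\<in>Xs. P \<omega> X * (\<Sum>b<k. c * (1 - I X b))) = (\<Sum>X\<in>Xs. \<Sum>b<k. c * (P \<omega> X - P \<omega> X * I X b))"
          by (simp add: sum_distrib_left algebra_simps)
        also have "\<dots> = (\<Sum>b<k. \<Sum>X\<in>Xs. c * (P \<omega> X - P \<omega> X * I X b))" by (rule sum.swap)
        also have "\<dots> = (\<Sum>b<k. c * ((\<Sum>X\<in>Xs. P \<omega> X) - (\<Sum>X\<in>Xs. P \<omega> X * I X b)))"
          by (simp add: sum_distrib_left[symmetric] sum_subtractf)
        also have "\<dots> = (\<Sum>b<k. c * (1 - (\<Sum>X\<in>Xs. P \<omega> X * I X b)))" using Psum[of \<omega>] by simp
        finally show ?thesis unfolding c_def I_def by simp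
      qed
      also have "\<dots> \<le> (\<Sum>X\<in>Xs. P \<omega> X * (\<Sum>x\<in>cube d. (est X x - F \<omega> x)\<^sup>2))"
      proof (rule sum_mono)
        fix X assume X: "X \<in> Xs"
        have "(\<Sum>b<k. a\<^sup>2/4 * (1 - of_bool (\<psi> X b = \<omega> b))) \<le>
              (\<Sum>b<k. \<Sum>j<B. (y X b j - (if j = \<omega> b then a else 0))\<^sup>2)"
        proof (rule sum_mono)
          fix b assume b: "b \<in> {..<k}"
          have "\<omega> b \<le> B" using \<omega> b unfolding \<Omega>_def by auto
          then show "a\<^sup>2/4 * (1 - of_bool (\<psi> X b = \<omega> b)) \<le> (\<Sum>j<B. (y X b j - (if j = \<omega> b then a else 0))\<^sup>2)"
            unfolding \<psi>_def by (rule loss_block[OF a])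
        qed
        also have "\<dots> \<le> (\<Sum>x\<in>cube d. (est X x - F \<omega> x)\<^sup>2)" by (rule loss[OF \<omega>])
        finally show "P \<omega> X * (\<Sum>b<k. a\<^sup>2/4 * (1 - of_bool (\<psi> X b = \<omega> b))) \<le>
              P \<omega> X * (\<Sum>x\<in>cube d. (est X x - F \<omega> x)\<^sup>2)"
          using Ppos[of \<omega> X] by (intro mult_left_mono) auto
      qed
      also have "\<dots> = risk d n est (F \<omega>)" unfolding risk_def Xs_def P_def by simp
      finally show ?thesis .
    qed
    define Pr where "Pr \<omega> b = (\<Sum>X\<in>Xs. P \<omega> X * of_bool (\<psi> X b = \<omega> b))" for \<omega> b
    have block: "(\<Sum>\<omega>\<in>\<Omega>. Pr \<omega> b) \<le> 3/4 * card \<Omega>" if b: "b < k" for b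
    proof -
      define \<Omega>' where "\<Omega>' = PiE ({..<k} - {b}) (\<lambda>_. {..B})"
      have split: "(\<Sum>\<omega>\<in>\<Omega>. G \<omega>) = (\<Sum>\<omega>'\<in>\<Omega>'. \<Sum>j\<in>{..B}. G (\<omega>'(b := j)))" for G :: "(nat \<Rightarrow> nat) \<Rightarrow> real"
        unfolding \<Omega>_def \<Omega>'_def by (rule sum_PiE_split) (use b in auto)
      have cardO: "real (card \<Omega>) = real (card \<Omega>') * (real B + 1)"
      proof -
        have "real (card \<Omega>) = (\<Sum>\<omega>\<in>\<Omega>. 1)" by simp
        also have "\<dots> = (\<Sum>\<omega>'\<in>\<Omega>'. \<Sum>j\<in>{..B}. 1)" by (rule split)
        finally show ?thesis by simp
      qed
      have inner: "(\<Sum>j\<in>{..B}. Pr (\<omega>'(b := j)) b) \<le> 3/4 * (real B + 1)" if \<omega>': "\<omega>' \<in> \<Omega>'" for \<omega>'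
      proof -
        define Q where "Q X = P (\<omega>'(b := B)) X" for X
        define PP where "PP j X = P (\<omega>'(b := j)) X" for j X
        have inO: "\<omega>'(b := j) \<in> \<Omega>" if "j \<le> B" for j
          using \<omega>' that b unfolding \<Omega>_def \<Omega>'_def by (auto simp: PiE_def extensional_def Pi_def)
        have Tins: "T (\<omega>'(b := j)) = insert (g b j) (T (\<omega>'(b := B)))" if j: "j < B" for j
        proof -
          have "{b' \<in> {..<k}. (\<omega>'(b := j)) b' < B} = insert b {b' \<in> {..<k}. (\<omega>'(b := B)) b' < B}"
            using j b by auto
          then show ?thesis unfolding T_def
            by (auto intro!: image_eqI simp: image_iff)
        qed
        have notin: "g b j \<notin> T (\<omega>'(b := B))" if j: "j < B" for j
          using memT[OF inO[of B] b j] j by simp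
        have chi: "(\<Sum>X\<in>Xs. (PP j X)\<^sup>2 / Q X) \<le> 1 + (real B + 1) / 16" if j: "j < B" for j
        proof -
          have "(\<Sum>X\<in>Xs. (PP j X)\<^sup>2 / Q X) = (\<Sum>X\<in>Xs. \<Prod>i<n. (F (\<omega>'(b := j)) (X i))\<^sup>2 / F (\<omega>'(b := B)) (X i))"
            unfolding PP_def Q_def P_def by (simp add: prod_power_distrib prod_dividef)
          also have "\<dots> = (\<Sum>x\<in>cube d. (F (\<omega>'(b := j)) x)\<^sup>2 / F (\<omega>'(b := B)) x) ^ n"
            unfolding Xs_def by (rule sum_prod_PiE_const) simp
          also have "(\<Sum>x\<in>cube d. (F (\<omega>'(b := j)) x)\<^sup>2 / F (\<omega>'(b := B)) x) \<le> 1 + 2 * 2 ^ d * a\<^sup>2"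
            unfolding F_def Tins[OF j]
          proof (rule chi_fw[OF TS0'])
            show "g b j \<in> cube d - {{}}" using gS0[OF b j] unfolding S0_def .
            show "g b j \<notin> T (\<omega>'(b := B))" by (rule notin[OF j])
            show "\<And>x. x \<in> cube d \<Longrightarrow> 1 / (2 * 2 ^ d) \<le> fw d a (T (\<omega>'(b := B))) x"
              using Flow unfolding F_def by blast
          qed
          then have "(\<Sum>x\<in>cube d. (F (\<omega>'(b := j)) x)\<^sup>2 / F (\<omega>'(b := B)) x) ^ n \<le> (1 + 2 * 2 ^ d * a\<^sup>2) ^ n"
            by (intro power_mono) (auto intro!: sum_nonneg simp: Fpos less_imp_le)
          also have "\<dots> \<le> exp (2 * 2 ^ d * a\<^sup>2) ^ n"
            by (intro power_mono) (auto simp: add_nonneg_nonneg)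
          also have "\<dots> = exp (2 * real n * 2 ^ d * a\<^sup>2)"
            by (simp add: exp_of_nat_mult[symmetric] algebra_simps)
          finally show ?thesis using ex by simp
        qed
        have tb: "(\<Sum>j<B. \<Sum>X\<in>Xs. PP j X * of_bool (\<psi> X b = j)) + (\<Sum>X\<in>Xs. Q X * of_bool (\<psi> X b = B))
           \<le> 3/4 * (real B + 1)"
          by (rule test_bound[OF finXs _ _ _ chi _ B]) (auto simp: Q_def PP_def Ppos Psum)
        have "(\<Sum>j\<in>{..B}. Pr (\<omega>'(b := j)) b) = (\<Sum>j<B. Pr (\<omega>'(b := j)) b) + Pr (\<omega>'(b := B)) b"
          by (simp add: lessThan_Suc_atMost[symmetric])
        also have "\<dots> = (\<Sum>j<B. \<Sum>X\<in>Xs. PP j X * of_bool (\<psi> X b = j)) + (\<Sum>X\<in>Xs. Q X * of_bool (\<psi> X b = B))"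
          unfolding Pr_def PP_def Q_def by simp
        finally show ?thesis using tb by simp
      qed
      have "(\<Sum>\<omega>\<in>\<Omega>. Pr \<omega> b) = (\<Sum>\<omega>'\<in>\<Omega>'. \<Sum>j\<in>{..B}. Pr (\<omega>'(b := j)) b)" by (rule split)
      also have "\<dots> \<le> (\<Sum>\<omega>'\<in>\<Omega>'. 3/4 * (real B + 1))" by (rule sum_mono) (rule inner)
      also have "\<dots> = 3/4 * card \<Omega>" using cardO by simp
      finally show ?thesis .
    qed
    have total: "real (card \<Omega>) * (real k * a\<^sup>2 / 16) \<le> (\<Sum>\<omega>\<in>\<Omega>. risk d n est (F \<omega>))"
    proof -
      have "(\<Sum>\<omega>\<in>\<Omega>. \<Sum>b<k. a\<^sup>2/4 * (1 - Pr \<omega> b)) \<le> (\<Sum>\<omega>\<in>\<Omega>. risk d n est (F \<omega>))"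
        by (rule sum_mono) (use riskO in \<open>simp add: Pr_def\<close>)
      moreover have "(\<Sum>\<omega>\<in>\<Omega>. \<Sum>b<k. a\<^sup>2/4 * (1 - Pr \<omega> b)) = (\<Sum>b<k. a\<^sup>2/4 * (card \<Omega> - (\<Sum>\<omega>\<in>\<Omega>. Pr \<omega> b)))"
      proof -
        define c where "c = a\<^sup>2/4"
        have "(\<Sum>\<omega>\<in>\<Omega>. \<Sum>b<k. c * (1 - Pr \<omega> b)) = (\<Sum>b<k. \<Sum>\<omega>\<in>\<Omega>. c * (1 - Pr \<omega> b))"
          by (rule sum.swap)
        also have "\<dots> = (\<Sum>b<k. c * (card \<Omega> - (\<Sum>\<omega>\<in>\<Omega>. Pr \<omega> b)))"
          by (intro sum.cong refl) (simp add: sum_distrib_left[symmetric] sum_subtractf)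
        finally show ?thesis unfolding c_def .
      qed
      moreover have "(\<Sum>b<k. a\<^sup>2/4 * (card \<Omega> - (\<Sum>\<omega>\<in>\<Omega>. Pr \<omega> b))) \<ge> (\<Sum>b<k. a\<^sup>2/4 * (card \<Omega> / 4))"
      proof (rule sum_mono)
        fix b assume "b \<in> {..<k}"
        then have "(\<Sum>\<omega>\<in>\<Omega>. Pr \<omega> b) \<le> 3/4 * card \<Omega>" using block by simp
        then show "a\<^sup>2/4 * (card \<Omega> / 4) \<le> a\<^sup>2/4 * (card \<Omega> - (\<Sum>\<omega>\<in>\<Omega>. Pr \<omega> b))"
          by (intro mult_left_mono) auto
      qed
      moreover have "(\<Sum>b<k. a\<^sup>2/4 * (card \<Omega> / 4)) = real (card \<Omega>) * (real k * a\<^sup>2 / 16)" by simp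
      ultimately show ?thesis by linarith
    qed
    obtain \<omega> where \<omega>: "\<omega> \<in> \<Omega>" "real k * a\<^sup>2 / 16 \<le> risk d n est (F \<omega>)"
    proof (rule ccontr)
      assume "\<not> thesis"
      then have lt: "\<And>\<omega>. \<omega> \<in> \<Omega> \<Longrightarrow> risk d n est (F \<omega>) < real k * a\<^sup>2 / 16" using that by force
      have "(\<Sum>\<omega>\<in>\<Omega>. risk d n est (F \<omega>)) < (\<Sum>\<omega>\<in>\<Omega>. real k * a\<^sup>2 / 16)"
        by (rule sum_strict_mono[OF finO neO lt])
      then show False using total by simp
    qed
    show "ereal (real k * a\<^sup>2 / 16) \<le> (SUP f\<in>Fplus1 d p. ereal (risk d n est f))"
      by (rule SUP_upper2[OF Fin[of \<omega>]]) (use \<omega> in simp)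
  qed
qed




lemma Mhalf_sq:
  fixes M :: real assumes "0 < M"
  shows "(M powr (-1/2))\<^sup>2 = 1 / M"
proof -
  have "(M powr (-1/2))\<^sup>2 = M powr (-1/2) * M powr (-1/2)" by (simp add: power2_eq_square)
  also have "\<dots> = M powr (-1)" by (simp add: powr_add[symmetric])
  also have "\<dots> = 1 / M" using assms by (simp add: powr_minus divide_inverse)
  finally show ?thesis .
qed

lemma part2:
  fixes p :: real and d n :: nat
  assumes p: "0 < p" "p \<le> 1" and d: "d \<ge> 1" and nM: "real n \<ge> ((2::real) ^ d) powr (2 / p)"
  shows "ereal (1 / 1024 / real n) \<le> minimax_risk d p n"
proof -
  define M :: real where "M = 2 ^ d"
  have M2: "M \<ge> 2" unfolding M_def using d by (metis le_add_diff_inverse power_increasing power_one_right one_le_numeral)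
  have Mpos: "0 < M" using M2 by simp
  have "M powr 2 \<le> M powr (2 / p)" using p M2 by (intro powr_mono) (auto simp: field_simps)
  then have nM2: "M * M \<le> real n" using nM Mpos unfolding M_def[symmetric] by (simp add: powr_realpow power2_eq_square[symmetric])
  have npos: "0 < real n" using nM2 Mpos by (smt (verit) mult_pos_pos)
  define k :: nat where "k = 2 ^ d - 1"
  have kM: "real k = M - 1" unfolding k_def M_def by (simp add: of_nat_diff)
  define q where "q = 1 / (32 * real n * M)"
  have qpos: "0 < q" unfolding q_def using npos Mpos by simp
  define a where "a = sqrt q"
  have a: "0 < a" unfolding a_def using qpos by simp
  have a2: "a\<^sup>2 = q" unfolding a_def using qpos by simp
  have "ereal (real k * a\<^sup>2 / 16) \<le> minimax_risk d p n"
  proof (rule main_lb[OF p(1) _ _ a])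
    show "1 \<le> (1::nat)" by simp
    show "k * 1 \<le> 2 ^ d - 1" unfolding k_def by simp
    show "real k * a \<le> ((2::real) ^ d) powr (-1/2) / 2"
    proof (rule power2_le_imp_le)
      have "(real k * a)\<^sup>2 = (M - 1)\<^sup>2 * q" using kM a2 by (simp add: power_mult_distrib)
      also have "\<dots> \<le> M * M * q"
      proof -
        have "(M - 1) * (M - 1) \<le> M * M" by (rule mult_mono) (use M2 in auto)
        then show ?thesis using qpos by (intro mult_right_mono) (auto simp: power2_eq_square)
      qed
      also have "\<dots> = M / (32 * real n)" unfolding q_def using Mpos by (simp add: field_simps)
      also have "\<dots> \<le> 1 / (4 * M)" using nM2 Mpos npos by (simp add: field_simps)
      also have "\<dots> = (M powr (-1/2) / 2)\<^sup>2" using Mhalf_sq[OF Mpos] by (simp add: power_divide)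
      finally show "(real k * a)\<^sup>2 \<le> (((2::real) ^ d) powr (-1/2) / 2)\<^sup>2" unfolding M_def .
    qed simp
    show "a \<le> ((2::real) ^ d) powr (-1/2) * (real k + 1) powr (-1/p)"
    proof (rule power2_le_imp_le)
      have kk: "real k + 1 = M" using kM by simp
      have e1: "(M powr (-1/p))\<^sup>2 = 1 / M powr (2/p)"
      proof -
        have "(M powr (-1/p))\<^sup>2 = M powr (-1/p) * M powr (-1/p)" by (simp add: power2_eq_square)
        also have "\<dots> = M powr (-1/p + -1/p)" by (rule powr_add[symmetric])
        also have "-1/p + -1/p = - (2/p)" by simp
        also have "M powr (- (2/p)) = 1 / M powr (2/p)" by (simp add: powr_minus divide_inverse)
        finally show ?thesis .
      qed
      have "a\<^sup>2 = 1 / (32 * real n * M)" using a2 q_def by simp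
      also have "\<dots> \<le> 1 / (M powr (2/p) * M)"
        using nM Mpos npos unfolding M_def[symmetric] by (intro divide_left_mono) (auto simp: field_simps)
      also have "\<dots> = (M powr (-1/2) * (real k + 1) powr (-1/p))\<^sup>2"
        unfolding kk power_mult_distrib Mhalf_sq[OF Mpos] e1 by simp
      finally show "a\<^sup>2 \<le> (((2::real) ^ d) powr (-1/2) * (real k + 1) powr (-1/p))\<^sup>2" unfolding M_def .
    qed simp
    show "exp (2 * real n * 2 ^ d * a\<^sup>2) \<le> 1 + (real 1 + 1) / 16"
    proof -
      have e: "2 * real n * 2 ^ d * a\<^sup>2 = 1/16" unfolding a2 q_def M_def[symmetric] using npos Mpos by simp
      have "exp (1/16::real) \<le> 1 + 2 * (1/16)" by (rule real_exp_bound_lemma) auto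
      then show ?thesis unfolding e by simp
    qed
  qed
  moreover have "1 / 1024 / real n \<le> real k * a\<^sup>2 / 16"
  proof -
    have "real k * a\<^sup>2 / 16 = (M - 1) / M / (512 * real n)" unfolding kM a2 q_def using Mpos npos by (simp add: field_simps)
    moreover have "1 / 2 \<le> (M - 1) / M" using M2 by (simp add: field_simps)
    then have "(1 / 2) / (512 * real n) \<le> (M - 1) / M / (512 * real n)"
      using npos by (intro divide_right_mono) auto
    moreover have "1 / 1024 / real n = (1 / 2) / (512 * real n)" by simp
    ultimately show ?thesis by linarith
  qed
  ultimately show ?thesis by (meson ereal_less_eq(3) order.trans)
qed




lemma expw:
  fixes w :: real assumes w: "0 \<le> w"
  shows "exp (w / 512) \<le> 1 + exp w / 32"
proof (cases "w \<le> 8")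
  case True
  have "exp (w / 512) \<le> 1 + 2 * (w / 512)" by (rule real_exp_bound_lemma) (use w True in auto)
  also have "\<dots> \<le> 1 + 1 / 32" using True by simp
  also have "\<dots> \<le> 1 + exp w / 32" using w by simp
  finally show ?thesis .
next
  case False
  have l2: "ln (2::real) \<le> 1" using ln_le_minus_one[of 2] by simp
  have "ln (32::real) = ln (2 ^ 5)" by simp
  also have "\<dots> = 5 * ln 2" by (simp only: ln_realpow)
  finally have l32: "ln (32::real) \<le> 5" using l2 by simp
  have "w / 512 \<le> w - ln 32" using False l32 by simp
  then have "exp (w / 512) \<le> exp (w - ln 32)" by simp
  also have "\<dots> = exp w / 32" by (simp add: exp_diff)
  finally show ?thesis by simp
qed

lemma part1:
  fixes p \<epsilon> :: real and d n :: nat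
  assumes p: "0 < p" "p \<le> 1" and e: "0 < \<epsilon>" "\<epsilon> < 1" and d: "d \<ge> 1"
    and Ln: "ln ((2::real) ^ d) \<le> real n" and nU: "real n \<le> ((2::real) ^ d) powr (2 * (1 - \<epsilon>) / p)"
  shows "ereal (min (1/4) (min (2 powr (-2/p)) (\<epsilon>/1024)) / 64 / 2 ^ d *
            (ln ((2::real) ^ d) / real n) powr (1 - p/2)) \<le> minimax_risk d p n"
proof -
  define c2 where "c2 = min (1/4) (min (2 powr (-2/p)) (\<epsilon>/1024))"
  have c2pos: "0 < c2" unfolding c2_def using e by simp
  have c2a: "c2 \<le> 1/4" "c2 \<le> 2 powr (-2/p)" "c2 \<le> \<epsilon>/1024" unfolding c2_def by auto
  define M :: real where "M = 2 ^ d"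
  have M2: "M \<ge> 2" unfolding M_def using d by (metis le_add_diff_inverse power_increasing power_one_right one_le_numeral)
  have Mpos: "0 < M" using M2 by simp
  define L where "L = ln M"
  have ln2: "1/2 \<le> ln (2::real)"
  proof -
    have "exp (1/2::real) \<le> 1 + 2 * (1/2)" by (rule real_exp_bound_lemma) auto
    then show ?thesis by (subst ln_ge_iff) auto
  qed
  have "L = real d * ln 2" unfolding L_def M_def by (simp add: ln_realpow)
  moreover have "1 * ln 2 \<le> real d * ln (2::real)" by (rule mult_right_mono) (use d ln2 in auto)
  then have "ln 2 \<le> real d * ln (2::real)" by (simp only: mult_1)
  ultimately have Lh: "1/2 \<le> L" using ln2 by linarith
  have Lpos: "0 < L" using Lh by simp
  have LnM: "L \<le> real n" using Ln unfolding L_def M_def .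
  have npos: "0 < real n" using LnM Lpos by simp
  define r where "r = real n / L"
  have r1: "1 \<le> r" unfolding r_def using LnM Lpos by simp
  have rpos: "0 < r" using r1 by simp
  define z where "z = r powr (p/2)"
  have z1: "1 \<le> z" unfolding z_def using r1 p by (intro ge_one_powr_ge_zero) auto
  have zz: "z * z \<le> r"
  proof -
    have "z * z = r powr p" unfolding z_def by (simp add: powr_add[symmetric])
    also have "\<dots> \<le> r powr 1" using p r1 by (intro powr_mono) auto
    finally show ?thesis using rpos by simp
  qed
  have zp: "z powr (2/p) = r" unfolding z_def using p rpos by (simp add: powr_powr)
  have zU: "z \<le> 2 * M powr (1 - \<epsilon>)"
  proof -
    have "z = real n powr (p/2) / L powr (p/2)" unfolding z_def r_def by (rule powr_divide)
    moreover have "real n powr (p/2) \<le> M powr (1 - \<epsilon>)"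
    proof -
      have "real n powr (p/2) \<le> (M powr (2 * (1 - \<epsilon>) / p)) powr (p/2)"
        using nU p unfolding M_def by (intro powr_mono2) auto
      also have "\<dots> = M powr (2 * (1 - \<epsilon>) / p * (p/2))" by (rule powr_powr)
      also have "2 * (1 - \<epsilon>) / p * (p/2) = 1 - \<epsilon>" using p by (simp add: field_simps)
      finally show ?thesis .
    qed
    moreover have "1/2 \<le> L powr (p/2)"
    proof -
      have "(1/2::real) powr 1 \<le> (1/2) powr (p/2)" using p by (intro powr_mono') auto
      also have "\<dots> \<le> L powr (p/2)" using Lh p by (intro powr_mono2) auto
      finally show ?thesis by simp
    qed
    ultimately have "z \<le> M powr (1 - \<epsilon>) / (1/2)"
      by (simp only:) (rule frac_le, auto)
    then show ?thesis by simp
  qed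
  define kn :: nat where "kn = max 1 (nat \<lfloor>z/2\<rfloor>)"
  have kreal: "real kn = max 1 (real_of_int \<lfloor>z/2\<rfloor>)"
    unfolding kn_def using z1 by (simp add: of_nat_max)
  have fl: "real_of_int \<lfloor>z/2\<rfloor> \<le> z/2" by (rule of_int_floor_le)
  have kle: "real kn \<le> max 1 (z/2)" unfolding kreal using fl by (simp only: max.mono order_refl)
  have kz: "real kn \<le> z" using kle z1 by simp
  have kge: "z / 4 \<le> real kn"
  proof (cases "z/2 < 1")
    case True then show ?thesis unfolding kreal by simp
  next
    case False
    then have f1: "1 \<le> real_of_int \<lfloor>z/2\<rfloor>" by (simp add: le_floor_iff)
    have "z/2 - 1 < real_of_int \<lfloor>z/2\<rfloor>" by linarith
    then have "z/4 \<le> real_of_int \<lfloor>z/2\<rfloor>" using f1 by linarith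
    then show ?thesis unfolding kreal by (simp add: max.coboundedI2)
  qed
  have k1: "1 \<le> kn" unfolding kn_def by simp
  have kpos: "0 < real kn" using k1 by simp
  have Me1: "1 \<le> M powr (1 - \<epsilon>)" using M2 e by (intro ge_one_powr_ge_zero) auto
  have kMe: "real kn \<le> M powr (1 - \<epsilon>)" using kle zU Me1 by simp
  have "M powr (1 - \<epsilon>) < M powr 1" using e M2 by (intro powr_less_mono) auto
  then have kltM: "real kn < M" using kMe Mpos by simp
  have Mnat: "real ((2::nat) ^ d) = M" unfolding M_def by simp
  have knM: "kn \<le> 2 ^ d - 1" using kltM unfolding Mnat[symmetric] by linarith
  define B where "B = (2 ^ d - 1) div kn"
  have B1: "1 \<le> B" unfolding B_def using knM k1 by (simp add: div_greater_zero_iff Suc_le_eq)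
  have kB: "kn * B \<le> 2 ^ d - 1" unfolding B_def by simp
  have Bgt: "2 ^ d - 1 < kn * (B + 1)"
  proof -
    have "2 ^ d - 1 = kn * B + (2 ^ d - 1) mod kn" unfolding B_def by simp
    moreover have "(2 ^ d - 1) mod kn < kn" using k1 by simp
    ultimately show ?thesis by simp
  qed
  have BM: "M powr \<epsilon> / 2 \<le> real B + 1"
  proof -
    have "real (2 ^ d - 1) < real (kn * (B + 1))" using Bgt by (simp only: of_nat_less_iff)
    then have "real (2 ^ d - 1) < real kn * (real B + 1)" by (simp add: algebra_simps)
    moreover have "real (2 ^ d - 1 :: nat) = M - 1" unfolding M_def by (simp add: of_nat_diff)
    ultimately have "(M - 1) / real kn \<le> real B + 1" using kpos by (simp add: field_simps)
    moreover have "(M / 2) / M powr (1 - \<epsilon>) \<le> (M - 1) / real kn"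
      using M2 kpos kMe by (intro frac_le) auto
    moreover have "M / M powr (1 - \<epsilon>) = M powr \<epsilon>"
    proof -
      have "M / M powr (1 - \<epsilon>) = M powr 1 / M powr (1 - \<epsilon>)" using Mpos by simp
      also have "\<dots> = M powr (1 - (1 - \<epsilon>))" by (rule powr_diff[symmetric])
      finally show ?thesis by simp
    qed
    ultimately show ?thesis by simp
  qed
  define q where "q = c2 * L / (real n * M)"
  have qpos: "0 < q" unfolding q_def using c2pos Lpos npos Mpos by simp
  have rq: "r * q = c2 / M" unfolding r_def q_def using Lpos npos Mpos by (simp add: field_simps)
  define a where "a = sqrt q"
  have a: "0 < a" unfolding a_def using qpos by simp
  have a2: "a\<^sup>2 = q" unfolding a_def using qpos by simp
  have main: "ereal (real kn * a\<^sup>2 / 16) \<le> minimax_risk d p n"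
  proof (rule main_lb[OF p(1) B1 kB a])
    show "real kn * a \<le> ((2::real) ^ d) powr (-1/2) / 2"
    proof (rule power2_le_imp_le)
      have "(real kn * a)\<^sup>2 = (real kn * real kn) * q" using a2 by (simp add: power_mult_distrib power2_eq_square)
      also have "\<dots> \<le> (z * z) * q" using kz kpos qpos by (intro mult_right_mono mult_mono) auto
      also have "\<dots> \<le> r * q" using zz qpos by (intro mult_right_mono) auto
      also have "\<dots> \<le> 1 / (4 * M)" unfolding rq using c2a(1) Mpos by (simp add: field_simps)
      also have "\<dots> = (M powr (-1/2) / 2)\<^sup>2" using Mhalf_sq[OF Mpos] by (simp add: power_divide)
      finally show "(real kn * a)\<^sup>2 \<le> (((2::real) ^ d) powr (-1/2) / 2)\<^sup>2" unfolding M_def .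
    qed simp
    show "a \<le> ((2::real) ^ d) powr (-1/2) * (real kn + 1) powr (-1/p)"
    proof (rule power2_le_imp_le)
      have e1: "((real kn + 1) powr (-1/p))\<^sup>2 = (real kn + 1) powr (-2/p)"
      proof -
        have "((real kn + 1) powr (-1/p))\<^sup>2 = (real kn + 1) powr (-1/p) * (real kn + 1) powr (-1/p)"
          by (simp add: power2_eq_square)
        also have "\<dots> = (real kn + 1) powr (-1/p + -1/p)" by (rule powr_add[symmetric])
        finally show ?thesis by simp
      qed
      have "(2 * z) powr (-2/p) \<le> (real kn + 1) powr (-2/p)"
        using kz z1 p by (intro powr_mono2') (auto simp: divide_nonneg_pos)
      moreover have "(2 * z) powr (-2/p) = 2 powr (-2/p) / r"
      proof -
        have "(2 * z) powr (-2/p) = 2 powr (-2/p) * z powr (-2/p)" by (rule powr_mult)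
        also have "z powr (-2/p) = inverse (z powr (2/p))"
          by (metis minus_divide_left powr_minus)
        finally show ?thesis unfolding zp by (simp add: divide_inverse)
      qed
      ultimately have h1: "2 powr (-2/p) / r \<le> (real kn + 1) powr (-2/p)" by simp
      have "c2 / r \<le> 2 powr (-2/p) / r" using c2a(2) rpos by (intro divide_right_mono) auto
      with h1 have h2: "c2 / r \<le> (real kn + 1) powr (-2/p)" by simp
      have "a\<^sup>2 = (1 / M) * (c2 / r)" unfolding a2 q_def r_def using Lpos npos Mpos by (simp add: field_simps)
      also have "\<dots> \<le> (1 / M) * (real kn + 1) powr (-2/p)" using h2 Mpos by (intro mult_left_mono) auto
      also have "\<dots> = (M powr (-1/2) * (real kn + 1) powr (-1/p))\<^sup>2"
        unfolding power_mult_distrib Mhalf_sq[OF Mpos] e1 ..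
      finally show "a\<^sup>2 \<le> (((2::real) ^ d) powr (-1/2) * (real kn + 1) powr (-1/p))\<^sup>2" unfolding M_def .
    qed simp
    show "exp (2 * real n * 2 ^ d * a\<^sup>2) \<le> 1 + (real B + 1) / 16"
    proof -
      have e1: "2 * real n * 2 ^ d * a\<^sup>2 = 2 * c2 * L"
        unfolding a2 q_def M_def[symmetric] using npos Mpos by (simp add: field_simps)
      have "2 * c2 * L \<le> \<epsilon> * L / 512" using c2a(3) Lpos by (simp add: field_simps)
      then have "exp (2 * c2 * L) \<le> exp (\<epsilon> * L / 512)" by simp
      also have "\<dots> \<le> 1 + exp (\<epsilon> * L) / 32" using expw[of "\<epsilon> * L"] e Lpos by simp
      also have "exp (\<epsilon> * L) = M powr \<epsilon>" unfolding L_def using Mpos by (simp add: powr_def)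
      also have "1 + M powr \<epsilon> / 32 \<le> 1 + (real B + 1) / 16" using BM by simp
      finally show ?thesis unfolding e1 .
    qed
  qed
  have fin: "c2 / 64 / 2 ^ d * (ln ((2::real) ^ d) / real n) powr (1 - p/2) \<le> real kn * a\<^sup>2 / 16"
  proof -
    have "(L / real n) powr (1 - p/2) = z / r"
    proof -
      have Ln_r: "L / real n = inverse r" unfolding r_def by simp
      have "(L / real n) powr (1 - p/2) = (inverse r) powr (1 - p/2)" by (simp only: Ln_r)
      also have "\<dots> = inverse r powr 1 / inverse r powr (p/2)" by (rule powr_diff)
      also have "inverse r powr (p/2) = inverse z" unfolding z_def by (rule inverse_powr)
      also have "inverse r powr 1 = inverse r" using rpos by simp
      finally have "(L / real n) powr (1 - p/2) = inverse r / inverse z" .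
      then show ?thesis using rpos z1 by (simp add: field_simps)
    qed
    then have "c2 / 64 / 2 ^ d * (ln ((2::real) ^ d) / real n) powr (1 - p/2) = (z / 4) * q / 16"
      unfolding L_def M_def[symmetric] q_def r_def using Lpos npos Mpos unfolding L_def
      by (simp add: field_simps)
    also have "\<dots> \<le> real kn * q / 16" using kge qpos by (intro divide_right_mono mult_right_mono) auto
    finally show ?thesis using a2 by simp
  qed
  show ?thesis using main fin unfolding c2_def[symmetric] by (meson ereal_less_eq(3) order.trans)
qed



theorem theorem2:
  shows "(\<forall>p::real. 0 < p \<and> p \<le> 1 \<longrightarrow>
          (\<forall>\<epsilon>::real. 0 < \<epsilon> \<and> \<epsilon> < 1 \<longrightarrow>
            (\<exists>C>0. \<forall>d n. d \<ge> 1 \<and> ln ((2::real) ^ d) \<le> real n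
                 \<and> real n \<le> ((2::real) ^ d) powr (2 * (1 - \<epsilon>) / p) \<longrightarrow>
               minimax_risk d p n \<ge> ereal (C / 2 ^ d *
                 (ln ((2::real) ^ d) / real n) powr (2 * (1/p - 1/2) / (2 * (1/p - 1/2) + 1))))))
       \<and> (\<exists>C>0. \<forall>p::real. \<forall>d n. 0 < p \<and> p \<le> 1 \<and> d \<ge> 1
                 \<and> real n \<ge> ((2::real) ^ d) powr (2 / p) \<and> (2::real) ^ d \<ge> 4 \<longrightarrow>
               minimax_risk d p n \<ge> ereal (C / real n))"
proof (intro conjI allI impI)
  fix p \<epsilon> :: real
  assume p: "0 < p \<and> p \<le> 1" and e: "0 < \<epsilon> \<and> \<epsilon> < 1"
  define C where "C = min (1/4) (min (2 powr (-2/p)) (\<epsilon>/1024)) / 64"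
  have Cpos: "0 < C" unfolding C_def using e by simp
  have ex: "2 * (1/p - 1/2) / (2 * (1/p - 1/2) + 1) = 1 - p/2" using p by (simp add: field_simps)
  show "\<exists>C>0. \<forall>d n. d \<ge> 1 \<and> ln ((2::real) ^ d) \<le> real n
                 \<and> real n \<le> ((2::real) ^ d) powr (2 * (1 - \<epsilon>) / p) \<longrightarrow>
               minimax_risk d p n \<ge> ereal (C / 2 ^ d *
                 (ln ((2::real) ^ d) / real n) powr (2 * (1/p - 1/2) / (2 * (1/p - 1/2) + 1)))"
  proof (intro exI[of _ C] conjI allI impI Cpos)
    fix d n :: nat
    assume h: "d \<ge> 1 \<and> ln ((2::real) ^ d) \<le> real n \<and> real n \<le> ((2::real) ^ d) powr (2 * (1 - \<epsilon>) / p)"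
    show "minimax_risk d p n \<ge> ereal (C / 2 ^ d *
                 (ln ((2::real) ^ d) / real n) powr (2 * (1/p - 1/2) / (2 * (1/p - 1/2) + 1)))"
      unfolding ex C_def using part1[of p \<epsilon> d n] p e h by simp
  qed
next
  show "\<exists>C>0. \<forall>p::real. \<forall>d n. 0 < p \<and> p \<le> 1 \<and> d \<ge> 1
                 \<and> real n \<ge> ((2::real) ^ d) powr (2 / p) \<and> (2::real) ^ d \<ge> 4 \<longrightarrow>
               minimax_risk d p n \<ge> ereal (C / real n)"
  proof (intro exI[of _ "1/1024"] conjI allI impI)
    fix p :: real and d n :: nat
    assume h: "0 < p \<and> p \<le> 1 \<and> d \<ge> 1 \<and> real n \<ge> ((2::real) ^ d) powr (2 / p) \<and> (2::real) ^ d \<ge> 4"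
    show "minimax_risk d p n \<ge> ereal (1 / 1024 / real n)" using part2[of p d n] h by simp
  qed simp
qed

end
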